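(* Let $n,k$ be integers with $2\le 2k\le n-4$ and let $\lambda\in\overline{\mathcal{U}}_{T_{n,n-2k}}$. Then the Young diagram $\mathrm{KN}(S_\lambda)$ has exactly $2n-3+2k$ cells; consequently the sum of the hook lengths of the cells on its main diagonal is $2n-3+2k$.
   Context: A partition of $N$ into distinct parts is a sequence $\lambda=(\lambda_1<\dots<\lambda_t)$ of positive integers with sum $N$ and $t\ge 2$, identified with its set of parts. Missing parts: $\mathcal{M}_\lambda=\{1,\dots,\lambda_t\}\setminus\lambda$. $\lambda$ is refinable if two distinct missing parts sum to a part of $\lambda$, unrefinable otherwise; $\mathcal{U}_N$ is the set of unrefinable partitions of $N$. An element of $\mathcal{U}_N$ is maximal if its largest part is the maximum of the largest parts of elements of $\mathcal{U}_N$; $\widetilde{\mathcal{U}}_N$ is the set of these and $\overline{\mathcal{U}}_N=\{\lambda\in\widetilde{\mathcal{U}}_N:\#\mathcal{M}_\lambda=\lfloor\lambda_t/2\rfloor\}$. $T_n=n(n+1)/2$, $T_{n,d}=T_n-d$. $S_\lambda=\mathbb{N}_0\setminus\lambda$. The Keith–Nath transformation sends a set $S\subseteq\mathbb{N}_0$ with $0\in S$ and finite complement to the Young diagram $\mathrm{KN}(S)$ whose boundary is the lattice path that, starting at the origin, takes for $j=0,1,\dots,\max(\mathbb{N}_0\setminus S)$ an east step if $j\in S$ and a north step otherwise. Hook length of a cell = (cells to its right in its row) + (cells below it in its column) + 1; the main diagonal consists of the cells in row $i$, column $i$. *)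

theory Defs
  imports Main
begin

text \<open>Partitions into distinct parts are represented by their (finite) set of parts.\<close>

definition distinct_partition :: "nat \<Rightarrow> nat set \<Rightarrow> bool" where
  "distinct_partition N lam \<longleftrightarrow>
     finite lam \<and> 0 \<notin> lam \<and> card lam \<ge> 2 \<and> \<Sum>lam = N"

definition missing :: "nat set \<Rightarrow> nat set" where
  "missing lam = {1..Max lam} - lam"

definition refinable :: "nat set \<Rightarrow> bool" where
  "refinable lam \<longleftrightarrow>
     (\<exists>a\<in>missing lam. \<exists>b\<in>missing lam. a \<noteq> b \<and> a + b \<in> lam)"

definition unrefinable_parts :: "nat \<Rightarrow> nat set set" where
  "unrefinable_parts N = {lam. distinct_partition N lam \<and> \<not> refinable lam}"

definition maximal_unrefinable :: "nat \<Rightarrow> nat set set" where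
  "maximal_unrefinable N =
     {lam \<in> unrefinable_parts N. \<forall>mu \<in> unrefinable_parts N. Max mu \<le> Max lam}"

definition bar_unrefinable :: "nat \<Rightarrow> nat set set" where
  "bar_unrefinable N =
     {lam \<in> maximal_unrefinable N. card (missing lam) = Max lam div 2}"

definition tri :: "nat \<Rightarrow> nat" where
  "tri n = n * (n + 1) div 2"

definition tri_d :: "nat \<Rightarrow> nat \<Rightarrow> nat" where
  "tri_d n d = tri n - d"

definition S_of :: "nat set \<Rightarrow> nat set" where
  "S_of lam = UNIV - lam"

text \<open>Let c_0 < c_1 < ... < c_(r-1) be the elements of
  the (finite) complement of S.  The lattice path from the origin takes, for
  j = 0,...,max(complement), an east step if j is in S and a north step otherwise.
  Its north step from height y to height y+1 is the step j = c_y, preceded by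
  card {s in S. s < c_y} east steps.  The Young diagram is the region enclosed by
  the path, the y-axis and the line at height r; so the row at height y (between
  heights y and y+1) consists of the cells in columns 0,...,card {s in S. s < c_y} - 1.
  We record cells in English matrix coordinates (i, j), 0-based: row i counted
  from the top (i.e. height y = r - 1 - i), column j counted from the left.\<close>
definition KN :: "nat set \<Rightarrow> (nat \<times> nat) set" where
  "KN S = (let cs = sorted_list_of_set (UNIV - S); r = length cs in
      {(i, j). i < r \<and> j < card {s \<in> S. s < cs ! (r - 1 - i)}})"

definition hook_length :: "(nat \<times> nat) set \<Rightarrow> nat \<times> nat \<Rightarrow> nat" where
  "hook_length D c =
     card {j'. j' > snd c \<and> (fst c, j') \<in> D} + card {i'. i' > fst c \<and> (i', snd c) \<in> D} + 1"

definition diagonal_hook_sum :: "(nat \<times> nat) set \<Rightarrow> nat" where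
  "diagonal_hook_sum D = (\<Sum>c \<in> {c \<in> D. fst c = snd c}. hook_length D c)"

end

theory Submission
  imports Defs
begin


lemma UNIV_S_of: "UNIV - S_of lam = lam"
  unfolding S_of_def by auto

lemma below_nth_sorted:
  assumes "finite lam" and "i < card lam"
  shows "card {s \<in> lam. s < sorted_list_of_set lam ! i} = i"
proof -
  define cs where "cs = sorted_list_of_set lam"
  have len: "length cs = card lam" using assms cs_def by simp
  have sw: "sorted_wrt (<) cs" unfolding cs_def by simp
  have so: "sorted cs" unfolding cs_def by simp
  have dis: "distinct cs" unfolding cs_def by simp
  have st: "set cs = lam" using assms cs_def by simp
  have "{s \<in> lam. s < cs ! i} = set (take i cs)"
  proof (rule set_eqI, rule iffI)
    fix x assume "x \<in> {s \<in> lam. s < cs ! i}"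
    then have xl: "x \<in> set cs" and xi: "x < cs ! i" using st by auto
    then obtain j where j: "j < length cs" "x = cs ! j" by (metis in_set_conv_nth)
    have "j < i"
    proof (rule ccontr)
      assume "\<not> j < i" then have "cs ! i \<le> cs ! j" using sorted_nth_mono[OF so, of i j] j by simp
      then show False using xi j by simp
    qed
    then show "x \<in> set (take i cs)" using j assms len
      by (metis in_set_conv_nth length_take min.absorb4 nth_take order.strict_trans)
  next
    fix x assume "x \<in> set (take i cs)"
    then obtain j where j: "j < length (take i cs)" "x = take i cs ! j" by (metis in_set_conv_nth)
    then have ji: "j < i" and xj: "x = cs ! j" by auto
    have "cs ! j < cs ! i" using sorted_wrt_nth_less[OF sw ji] assms len by simp
    moreover have "x \<in> lam" using xj ji assms len st by (metis nth_mem order.strict_trans)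
    ultimately show "x \<in> {s \<in> lam. s < cs ! i}" using xj by simp
  qed
  moreover have "card (set (take i cs)) = i"
    using dis assms len by (simp add: distinct_card)
  ultimately show ?thesis unfolding cs_def by simp
qed

lemma KN_card:
  assumes "finite lam"
  shows "card (KN (S_of lam)) = (\<Sum>i<card lam. sorted_list_of_set lam ! i - i)"
proof -
  define cs where "cs = sorted_list_of_set lam"
  define t where "t = card lam"
  have len: "length cs = t" using assms cs_def t_def by simp
  define h where "h i = card {s \<in> S_of lam. s < cs ! i}" for i
  have KN: "KN (S_of lam) = Sigma {..<t} (\<lambda>i. {..<h (t - Suc i)})"
    unfolding KN_def UNIV_S_of Let_def h_def using len cs_def by auto
  have "card (KN (S_of lam)) = (\<Sum>i<t. h (t - Suc i))" unfolding KN by simp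
  also have "\<dots> = (\<Sum>i<t. h i)" by (rule sum.nat_diff_reindex)
  also have "\<dots> = (\<Sum>i<t. cs ! i - i)"
  proof (rule sum.cong[OF refl])
    fix i assume "i \<in> {..<t}" then have i: "i < t" by simp
    have eq: "{s \<in> S_of lam. s < cs ! i} = {..<cs ! i} - {s \<in> lam. s < cs ! i}"
      unfolding S_of_def by auto
    have "card {s \<in> S_of lam. s < cs ! i} = card {..<cs ! i} - card {s \<in> lam. s < cs ! i}"
      unfolding eq by (rule card_Diff_subset) (auto intro: finite_subset[OF _ assms])
    then show "h i = cs ! i - i" unfolding h_def using below_nth_sorted[OF assms, of i] i t_def cs_def by simp
  qed
  finally show ?thesis unfolding cs_def t_def .
qed



lemma diag_hook:
  assumes fin: "finite D"
    and cl: "\<And>i j i' j'. (i, j) \<in> D \<Longrightarrow> i' \<le> i \<Longrightarrow> j' \<le> j \<Longrightarrow> (i', j') \<in> D"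
  shows "diagonal_hook_sum D = card D"
proof -
  define h where "h c = min (fst c) (snd c)" for c :: "nat \<times> nat"
  have "card D = (\<Sum>x\<in>D. 1)" by simp
  also have "\<dots> = (\<Sum>y\<in>h ` D. \<Sum>x\<in>{x\<in>D. h x = y}. 1)"
    by (rule sum.image_gen[OF fin])
  also have "\<dots> = (\<Sum>y\<in>h ` D. card {x\<in>D. h x = y})" by simp
  finally have c1: "card D = (\<Sum>y\<in>h ` D. card {x\<in>D. h x = y})" .
  have hD: "h ` D = fst ` {c \<in> D. fst c = snd c}"
  proof (rule set_eqI, rule iffI)
    fix y assume "y \<in> h ` D"
    then obtain i j where ij: "(i, j) \<in> D" "y = min i j" unfolding h_def by auto
    then have "(y, y) \<in> D" using cl[OF ij(1)] by simp
    then show "y \<in> fst ` {c \<in> D. fst c = snd c}" by force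
  next
    fix y assume "y \<in> fst ` {c \<in> D. fst c = snd c}"
    then obtain c where c: "c \<in> D" "fst c = snd c" "y = fst c" by auto
    then have "h c = y" unfolding h_def by simp
    then show "y \<in> h ` D" using c(1) by blast
  qed
  have inj: "inj_on fst {c \<in> D. fst c = snd c}"
  proof (rule inj_onI)
    fix x y :: "nat \<times> nat" assume "x \<in> {c \<in> D. fst c = snd c}" "y \<in> {c \<in> D. fst c = snd c}" "fst x = fst y"
    then show "x = y" by (simp add: prod_eq_iff)
  qed
  have ds: "diagonal_hook_sum D = (\<Sum>d\<in>fst ` {c \<in> D. fst c = snd c}. hook_length D (d, d))"
  proof -
    have "(\<Sum>d\<in>fst ` {c \<in> D. fst c = snd c}. hook_length D (d, d))
        = (\<Sum>c\<in>{c \<in> D. fst c = snd c}. hook_length D (fst c, fst c))"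
      by (rule sum.reindex[OF inj, unfolded comp_def])
    also have "\<dots> = (\<Sum>c\<in>{c \<in> D. fst c = snd c}. hook_length D c)"
    proof (rule sum.cong[OF refl])
      fix c :: "nat \<times> nat" assume "c \<in> {c \<in> D. fst c = snd c}"
      then have "(fst c, fst c) = c" by (simp add: prod_eq_iff)
      then show "hook_length D (fst c, fst c) = hook_length D c" by simp
    qed
    finally show ?thesis unfolding diagonal_hook_sum_def by simp
  qed
  have hk: "card {x\<in>D. h x = d} = hook_length D (d, d)" if dd: "(d, d) \<in> D" for d
  proof -
    define R where "R = {j'. j' > d \<and> (d, j') \<in> D}"
    define C where "C = {i'. i' > d \<and> (i', d) \<in> D}"
    have fR: "finite R"
    proof -
      have "R \<subseteq> snd ` D" unfolding R_def by force
      then show ?thesis using fin finite_subset by blast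
    qed
    have fC: "finite C"
    proof -
      have "C \<subseteq> fst ` D" unfolding C_def by force
      then show ?thesis using fin finite_subset by blast
    qed
    have eq: "{x\<in>D. h x = d} = insert (d, d) (Pair d ` R \<union> (\<lambda>i. (i, d)) ` C)"
    proof (rule set_eqI)
      fix x :: "nat \<times> nat"
      obtain a b where x: "x = (a, b)" by fastforce
      show "x \<in> {x\<in>D. h x = d} \<longleftrightarrow> x \<in> insert (d, d) (Pair d ` R \<union> (\<lambda>i. (i, d)) ` C)"
      proof -
        have i1: "(a, b) \<in> Pair d ` R \<longleftrightarrow> a = d \<and> b \<in> R" by blast
        have i2: "(a, b) \<in> (\<lambda>i. (i, d)) ` C \<longleftrightarrow> b = d \<and> a \<in> C" by blast
        have l: "(a, b) \<in> {x\<in>D. h x = d} \<longleftrightarrow> (a, b) \<in> D \<and> min a b = d" unfolding h_def by simp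
        have key: "((a, b) \<in> D \<and> min a b = d) = ((a, b) = (d, d) \<or>
           a = d \<and> d < b \<and> (d, b) \<in> D \<or> b = d \<and> d < a \<and> (a, d) \<in> D)"
        proof (cases "a \<le> b")
          case True
          then have "min a b = a" by simp
          then show ?thesis using dd True by (cases "a = b") auto
        next
          case False
          then have "min a b = b" by simp
          then show ?thesis using dd False by auto
        qed
        show ?thesis unfolding x l insert_iff Un_iff i1 i2 unfolding R_def C_def mem_Collect_eq
          using key by simp
      qed
    qed
    have "card {x\<in>D. h x = d} = Suc (card (Pair d ` R \<union> (\<lambda>i. (i, d)) ` C))"
      unfolding eq by (rule card_insert_disjoint) (simp add: fR fC, auto simp: R_def C_def)
    also have "card (Pair d ` R \<union> (\<lambda>i. (i, d)) ` C) = card (Pair d ` R) + card ((\<lambda>i. (i, d)) ` C)"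
      by (rule card_Un_disjoint) (simp add: fR, simp add: fC, auto simp: R_def C_def)
    also have "card (Pair d ` R) = card R" by (rule card_image) (auto simp: inj_on_def)
    also have "card ((\<lambda>i. (i, d)) ` C) = card C" by (rule card_image) (auto simp: inj_on_def)
    finally show ?thesis unfolding hook_length_def R_def C_def by simp
  qed
  show ?thesis unfolding ds c1 hD
    by (rule sum.cong[OF refl]) (auto simp: hk)
qed



lemma two_sum_1: "2 * \<Sum>{1..p::nat} = p * (p + 1)"
  by (induction p) (auto simp: atLeastAtMostSuc_conv)

lemma two_tri: "2 * tri n = n * (n + 1)"
  unfolding tri_def by simp

lemma construct:
  assumes k: "1 \<le> k" and n: "2 * k + 4 \<le> n"
  shows "\<exists>mu\<in>unrefinable_parts (tri_d n (n - 2 * k)). Max mu = 2 * n - 5"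
proof (cases "n = 2 * k + 4")
  case True
  define mu where "mu = insert (2 * n - 5) {1..n-2}"
  have mem: "x \<in> mu \<longleftrightarrow> x = 2 * n - 5 \<or> (1 \<le> x \<and> x \<le> n - 2)" for x
    unfolding mu_def by auto
  have fin: "finite mu" unfolding mu_def by simp
  have Mx: "Max mu = 2 * n - 5"
    by (rule Max_eqI[OF fin]) (use n in \<open>auto simp: mem\<close>)
  have sm: "\<Sum>mu = 2 * n - 5 + \<Sum>{1..n-2}" unfolding mu_def using n by (subst sum.insert) auto
  have "2 * \<Sum>mu = 2 * tri n - 2 * (n - 2 * k)"
    unfolding sm two_tri using two_sum_1[of "n-2"] True by (simp add: algebra_simps)
  then have s: "\<Sum>mu = tri_d n (n - 2 * k)" unfolding tri_d_def by simp
  have c2: "2 \<le> card mu"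
  proof -
    have "{1, 2 * n - 5} \<subseteq> mu" using n by (auto simp: mem)
    then have "card {1, 2 * n - 5} \<le> card mu" using fin card_mono by blast
    then show ?thesis using n by simp
  qed
  have mem': "x \<in> mu \<longleftrightarrow> x = 4 * k + 3 \<or> (1 \<le> x \<and> x \<le> 2 * k + 2)" for x
    unfolding mem using True by auto
  have cls: "2 * k + 3 \<le> a \<and> a \<le> 4 * k + 2" if "a \<in> missing mu" for a
    using that True unfolding missing_def Mx by (auto simp: mem')
  have nr: "\<not> refinable mu"
  proof
    assume "refinable mu"
    then obtain a b where a: "a \<in> missing mu" and b: "b \<in> missing mu" and ab: "a + b \<in> mu"
      unfolding refinable_def by blast
    show False using cls[OF a] cls[OF b] ab unfolding mem' by linarith
  qed
  have "mu \<in> unrefinable_parts (tri_d n (n - 2 * k))"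
    unfolding unrefinable_parts_def distinct_partition_def using fin s c2 nr n by (auto simp: mem)
  then show ?thesis using Mx by blast
next
  case False
  then have n5: "2 * k + 5 \<le> n" using n by simp
  define mu where "mu = insert (2 * n - 5) (insert (n + k - 2) (insert (n - 2) ({1..n-4} - {n - 3 - k})))"
  have mem: "x \<in> mu \<longleftrightarrow> x = 2 * n - 5 \<or> x = n + k - 2 \<or> x = n - 2 \<or> (1 \<le> x \<and> x \<le> n - 4 \<and> x \<noteq> n - 3 - k)" for x
    unfolding mu_def by auto
  have fin: "finite mu" unfolding mu_def by simp
  have Mx: "Max mu = 2 * n - 5"
    by (rule Max_eqI[OF fin]) (use n k in \<open>auto simp: mem\<close>)
  have sm: "\<Sum>mu = 2 * n - 5 + (n + k - 2) + (n - 2) + (\<Sum>{1..n-4} - (n - 3 - k))"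
  proof -
    define A where "A = {1..n-4} - {n - 3 - k}"
    have fA: "finite A" unfolding A_def by simp
    have "\<Sum>mu = 2 * n - 5 + \<Sum>(insert (n + k - 2) (insert (n - 2) A))"
      unfolding mu_def A_def[symmetric] by (rule sum.insert) (use n5 k fA in \<open>auto simp: A_def\<close>)
    also have "\<Sum>(insert (n + k - 2) (insert (n - 2) A)) = (n + k - 2) + \<Sum>(insert (n - 2) A)"
      by (rule sum.insert) (use n5 k fA in \<open>auto simp: A_def\<close>)
    also have "\<Sum>(insert (n - 2) A) = (n - 2) + \<Sum>A"
      by (rule sum.insert) (use n5 k fA in \<open>auto simp: A_def\<close>)
    also have "\<Sum>A = \<Sum>{1..n-4} - (n - 3 - k)"
      unfolding A_def using n5 k by (subst sum_diff1_nat) auto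
    finally show ?thesis by simp
  qed
  have "2 * \<Sum>mu = 2 * tri n - 2 * (n - 2 * k)"
  proof -
    obtain p where p: "n = p + 2 * k + 5" using n5 by (metis add.commute le_Suc_ex add.assoc)
    have "2 * \<Sum>{1..n-4} = (n - 4) * (n - 3)" proof -
      have e: "n - 4 + 1 = n - 3" using n5 by simp
      show ?thesis using two_sum_1[of "n-4", unfolded e] .
    qed
    moreover have "\<Sum>{1..n-4} \<ge> n - 3 - k"
    proof -
      have "n - 3 - k \<in> {1..n-4}" using n5 k by auto
      then show ?thesis using member_le_sum[of "n - 3 - k" "{1..n-4}" "\<lambda>x. x"] by simp
    qed
    ultimately show ?thesis unfolding sm two_tri using p k by (simp add: algebra_simps)
  qed
  then have s: "\<Sum>mu = tri_d n (n - 2 * k)" unfolding tri_d_def by simp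
  have c2: "2 \<le> card mu"
  proof -
    have "{n - 2, 2 * n - 5} \<subseteq> mu" using n by (auto simp: mem)
    then have "card {n - 2, 2 * n - 5} \<le> card mu" using fin card_mono by blast
    then show ?thesis using n by simp
  qed
  obtain p where p: "n = p + 2 * k + 5" using n5 by (metis add.commute le_Suc_ex add.assoc)
  have mem': "x \<in> mu \<longleftrightarrow> x = 2 * p + 4 * k + 5 \<or> x = p + 3 * k + 3 \<or> x = p + 2 * k + 3
      \<or> (1 \<le> x \<and> x \<le> p + 2 * k + 1 \<and> x \<noteq> p + k + 2)" for x
    unfolding mem p by (simp add: algebra_simps)
  have Mx': "Max mu = 2 * p + 4 * k + 5" using Mx p by simp
  have cls: "a = p + k + 2 \<or> a = p + 2 * k + 2 \<or> (p + 2 * k + 4 \<le> a \<and> a \<le> 2 * p + 4 * k + 4 \<and> a \<noteq> p + 3 * k + 3)"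
    if "a \<in> missing mu" for a
  proof -
    have a1: "1 \<le> a" "a \<le> 2 * p + 4 * k + 5" and a2: "a \<notin> mu"
      using that unfolding missing_def Mx' by auto
    have a3: "a \<noteq> 2 * p + 4 * k + 5" "a \<noteq> p + 3 * k + 3" "a \<noteq> p + 2 * k + 3"
      "\<not> (1 \<le> a \<and> a \<le> p + 2 * k + 1 \<and> a \<noteq> p + k + 2)"
      using a2 unfolding mem' by auto
    show ?thesis
    proof (cases "a \<le> p + 2 * k + 1")
      case True then show ?thesis using a1 a3 by auto
    next
      case False
      then show ?thesis using a1 a3 by (cases "a = p + 2 * k + 2") auto
    qed
  qed
  have nr: "\<not> refinable mu"
  proof
    assume "refinable mu"
    then obtain a b where a: "a \<in> missing mu" and b: "b \<in> missing mu" and ab: "a + b \<in> mu"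
      and neq: "a \<noteq> b"
      unfolding refinable_def by blast
    have ab': "a + b = 2 * p + 4 * k + 5 \<or> a + b = p + 3 * k + 3 \<or> a + b = p + 2 * k + 3
      \<or> (1 \<le> a + b \<and> a + b \<le> p + 2 * k + 1 \<and> a + b \<noteq> p + k + 2)"
      using ab unfolding mem' .
    show False using cls[OF a] cls[OF b] ab' neq k
      by (elim disjE conjE; linarith)
  qed
  have "mu \<in> unrefinable_parts (tri_d n (n - 2 * k))"
    unfolding unrefinable_parts_def distinct_partition_def using fin s c2 nr n by (auto simp: mem)
  then show ?thesis using Mx by blast
qed

lemma sum_sorted: "finite S \<Longrightarrow> \<Sum>S = (\<Sum>i<card S. sorted_list_of_set S ! i)"
proof -
  assume f: "finite S"
  have "\<Sum>S = sum_list (sorted_list_of_set S)"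
    using sum_list_distinct_conv_sum_set[of "sorted_list_of_set S" "\<lambda>x. x"] f by simp
  also have "\<dots> = (\<Sum>i = 0..<length (sorted_list_of_set S). sorted_list_of_set S ! i)"
    by (rule sum_list_sum_nth)
  finally show ?thesis using f by (simp add: atLeast0LessThan)
qed

lemma nth_ge:
  assumes "finite S" "0 \<notin> S" "i < card S"
  shows "i + 1 \<le> sorted_list_of_set S ! i"
proof -
  let ?c = "sorted_list_of_set S ! i"
  have "{s \<in> S. s < ?c} \<subseteq> {1..<?c}" using assms(2) by (auto simp: Suc_le_eq) (metis gr0I)
  then have "card {s \<in> S. s < ?c} \<le> card {1..<?c}" by (intro card_mono) auto
  then have "i \<le> ?c - 1" using below_nth_sorted[OF assms(1,3)] by simp
  moreover have "?c \<in> S" using assms by (metis length_sorted_list_of_set nth_mem set_sorted_list_of_set)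
  then have "?c \<noteq> 0" using assms(2) by metis
  ultimately show ?thesis by simp
qed

lemma two_sum_lt: "2 * (\<Sum>i<t. i) = t * (t - 1 :: nat)"
proof (induction t)
  case 0 then show ?case by simp
next
  case (Suc t)
  have "2 * (\<Sum>i<Suc t. i) = t * (t - 1) + 2 * t" using Suc by simp
  also have "\<dots> = Suc t * (Suc t - 1)" by (cases t) (simp_all add: algebra_simps)
  finally show ?case .
qed

lemma two_sum_lt1: "2 * (\<Sum>i<t. i + 1) = t * (t + 1 :: nat)"
  by (induction t) (auto simp: algebra_simps)

lemma sum_pos_lower:
  assumes "finite S" "0 \<notin> S"
  shows "card S * (card S + 1) \<le> 2 * \<Sum>S"
proof -
  have "(\<Sum>i<card S. i + 1) \<le> (\<Sum>i<card S. sorted_list_of_set S ! i)"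
    by (rule sum_mono) (use nth_ge[OF assms] in auto)
  then show ?thesis using two_sum_lt1[of "card S"] sum_sorted[OF assms(1)] by simp
qed

lemma KN_shape:
  assumes "finite lam"
  defines "f \<equiv> \<lambda>i. card {s \<in> S_of lam. s < sorted_list_of_set lam ! (card lam - 1 - i)}"
  shows "KN (S_of lam) = Sigma {..<card lam} (\<lambda>i. {..<f i})"
    and "\<And>i i'. i' \<le> i \<Longrightarrow> i < card lam \<Longrightarrow> f i \<le> f i'"
proof -
  show "KN (S_of lam) = Sigma {..<card lam} (\<lambda>i. {..<f i})"
    unfolding KN_def UNIV_S_of Let_def f_def using assms by auto
next
  fix i i' assume ii: "i' \<le> i" "i < card lam"
  let ?cs = "sorted_list_of_set lam"
  have "?cs ! (card lam - 1 - i) \<le> ?cs ! (card lam - 1 - i')"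
    by (rule sorted_nth_mono) (use ii assms in auto)
  then have sub: "{s \<in> S_of lam. s < ?cs ! (card lam - 1 - i)} \<subseteq> {s \<in> S_of lam. s < ?cs ! (card lam - 1 - i')}"
    by auto
  have "finite {s \<in> S_of lam. s < ?cs ! (card lam - 1 - i')}"
    by (rule finite_subset[of _ "{..< ?cs ! (card lam - 1 - i')}"]) auto
  then show "f i \<le> f i'" unfolding f_def using card_mono sub by blast
qed

theorem proposition4p5:
  fixes n k :: nat and lam :: "nat set"
  assumes "2 \<le> 2 * k" and "2 * k + 4 \<le> n"
    and "lam \<in> bar_unrefinable (tri_d n (n - 2 * k))"
  shows "card (KN (S_of lam)) = 2 * n - 3 + 2 * k
       \<and> diagonal_hook_sum (KN (S_of lam)) = 2 * n - 3 + 2 * k"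
proof -
  have k: "1 \<le> k" using assms(1) by simp
  have n: "2 * k + 4 \<le> n" by (rule assms(2))
  define N where "N = tri_d n (n - 2 * k)"
  have lmax: "lam \<in> maximal_unrefinable N" and cm: "card (missing lam) = Max lam div 2"
    using assms(3) unfolding bar_unrefinable_def N_def by auto
  have lu: "lam \<in> unrefinable_parts N"
    and mx: "\<And>mu. mu \<in> unrefinable_parts N \<Longrightarrow> Max mu \<le> Max lam"
    using lmax unfolding maximal_unrefinable_def by auto
  have fin: "finite lam" and z: "0 \<notin> lam" and c2: "2 \<le> card lam" and sl: "\<Sum>lam = N"
    using lu unfolding unrefinable_parts_def distinct_partition_def by auto
  have Nsum: "2 * N + 2 * (n - 2 * k) = n * (n + 1)"
  proof -
    have "2 * tri n = n * (n + 1)" by (rule two_tri)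
    moreover have "n - 2 * k \<le> n * (n + 1) div 2"
    proof -
      have "n \<le> n * (n + 1) div 2" using n by (cases n) (auto simp: algebra_simps)
      then show ?thesis by linarith
    qed
    ultimately have "n - 2 * k \<le> tri n" by (simp add: tri_def)
    then show ?thesis unfolding N_def tri_d_def using two_tri[of n] by linarith
  qed
  define m where "m = Max lam"
  define t where "t = card lam"
  have ne: "lam \<noteq> {}" using c2 by auto
  have mi: "m \<in> lam" unfolding m_def using fin ne by simp
  have sub: "lam \<subseteq> {1..m}" unfolding m_def using fin z by (auto simp: Suc_le_eq intro: gr0I)
  have "card (missing lam) = m - t"
    unfolding missing_def m_def[symmetric] t_def using sub by (subst card_Diff_subset) (auto intro: finite_subset)
  moreover have "t \<le> m" unfolding t_def using card_mono[OF _ sub] by simp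
  ultimately have tm: "t = m - m div 2" using cm m_def by simp
  obtain mu where "mu \<in> unrefinable_parts N" "Max mu = 2 * n - 5"
    using construct[OF k n] unfolding N_def by blast
  then have m5: "2 * n - 5 \<le> m" using mx m_def by fastforce
  have tlow: "n - 2 \<le> t" using tm m5 n by simp
  have thigh: "t \<le> n - 2"
  proof (rule ccontr)
    assume "\<not> t \<le> n - 2"
    then have t1: "n - 1 \<le> t" by simp
    have s1: "\<Sum>lam = m + \<Sum>(lam - {m})" using fin mi by (simp add: sum.remove)
    have c1: "card (lam - {m}) = t - 1" unfolding t_def using fin mi by simp
    have "(t - 1) * t \<le> 2 * \<Sum>(lam - {m})"
      using sum_pos_lower[of "lam - {m}"] fin z c1 c2 t_def by simp
    moreover have "(n - 2) * (n - 1) \<le> (t - 1) * t" using t1 by (intro mult_le_mono) auto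
    moreover have "2 * n - 3 \<le> m" using tm t1 by simp
    ultimately have A: "(n - 2) * (n - 1) + 2 * (2 * n - 3) \<le> 2 * N" using s1 sl by simp
    have B: "2 * N + 2 * (n - 2 * k) = n * (n + 1)" using Nsum .
    define q where "q = n - 6"
    have q: "n = q + 6" unfolding q_def using n k by simp
    have e1: "(n - 2) * (n - 1) = q * q + 9 * q + 20" unfolding q by (simp add: algebra_simps)
    have e2: "n * (n + 1) = q * q + 13 * q + 42" unfolding q by (simp add: algebra_simps)
    have e3: "2 * n - 3 = 2 * q + 9" unfolding q by simp
    have e4: "n - 2 * k \<ge> 4" using n by simp
    show False using A B e1 e2 e3 e4 by linarith
  qed
  have tt: "t = n - 2" using tlow thigh by simp
  have ck: "card (KN (S_of lam)) = \<Sum>lam - (\<Sum>i<t. i)"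
  proof -
    have "card (KN (S_of lam)) = (\<Sum>i<t. sorted_list_of_set lam ! i - i)"
      using KN_card[OF fin] t_def by simp
    also have "\<dots> = (\<Sum>i<t. sorted_list_of_set lam ! i) - (\<Sum>i<t. i)"
      by (rule sum_subtractf_nat) (use nth_ge[OF fin z] t_def in fastforce)
    finally show ?thesis using sum_sorted[OF fin] t_def by simp
  qed
  have cres: "card (KN (S_of lam)) = 2 * n - 3 + 2 * k"
  proof -
    have B: "2 * N + 2 * (n - 2 * k) = n * (n + 1)" using Nsum .
    have C: "2 * (\<Sum>i<t. i) = (n - 2) * (n - 3)" using two_sum_lt[of t] tt by (simp add: numeral_eq_Suc)
    define q where "q = n - 6"
    have q: "n = q + 6" unfolding q_def using n k by simp
    have e1: "(n - 2) * (n - 3) = q * q + 7 * q + 12" unfolding q by (simp add: algebra_simps)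
    have e2: "n * (n + 1) = q * q + 13 * q + 42" unfolding q by (simp add: algebra_simps)
    have e3: "2 * n - 3 = 2 * q + 9" unfolding q by simp
    have e4: "n - 2 * k + 2 * k = q + 6" using n q by simp
    have le: "(\<Sum>i<t. i) \<le> \<Sum>lam" using B C sl e1 e2 e4 by linarith
    have d: "2 * card (KN (S_of lam)) + 2 * (\<Sum>i<t. i) = 2 * \<Sum>lam" using le unfolding ck by simp
    have r: "2 * card (KN (S_of lam)) = 4 * q + 18 + 4 * k" using d B C sl e1 e2 e4 by linarith
    then show ?thesis using q by simp
  qed
  have dh: "diagonal_hook_sum (KN (S_of lam)) = card (KN (S_of lam))"
  proof (rule diag_hook)
    show "finite (KN (S_of lam))" unfolding KN_shape(1)[OF fin] by auto
  next
    fix i j i' j' assume a: "(i, j) \<in> KN (S_of lam)" "i' \<le> i" "j' \<le> j"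
    then show "(i', j') \<in> KN (S_of lam)" unfolding KN_shape(1)[OF fin]
      using KN_shape(2)[OF fin, of i' i] by auto
  qed
  show ?thesis using cres dh by simp
qed

end
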